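(* There exists an almost surely positive random variable $M$ such that almost surely $X_n\ge M\,n^{p/2}$ for all $n\ge1$.
   Context: A sign-decorated binary tree is a finite planar rooted tree in which every internal vertex (node) has exactly two ordered children and carries a sign $\oplus$ or $\ominus$; $\mathrm{LIS}(t)$ is the maximal number of leaves of a subtree (induced by a set of leaves, unary vertices contracted) all of whose nodes carry $\oplus$. Fix $p\in(0,1)$. Trees $(T_n)_{n\ge1}$ are coupled by Rémy's algorithm: $T_1$ is a single leaf with a planting edge below it; given $T_n$, pick one of its $2n-1$ edges uniformly at random, insert on it a new node with an independent sign ($\oplus$ with probability $p$), and graft a new leaf on its left or right with probability $1/2$ each, giving $T_{n+1}$. $X_n=\mathrm{LIS}(T_n)$. *)

theory Defs
  imports "HOL-Probability.Probability"
begin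

text \<open>Sign-decorated binary trees. A node carries True for the sign plus
  and False for the sign minus.\<close>
datatype stree = Leaf | Node bool stree stree

text \<open>Number of vertices (leaves and nodes); equals the number of edges,
  each vertex being identified with the edge just above it (the root with the
  planting edge).\<close>
fun nverts :: "stree \<Rightarrow> nat" where
  "nverts Leaf = 1"
| "nverts (Node s l r) = 1 + nverts l + nverts r"

text \<open>Leaves, addressed by their path from the root (False = left child).\<close>
fun leaves :: "stree \<Rightarrow> bool list set" where
  "leaves Leaf = {[]}"
| "leaves (Node s l r) = Cons False ` leaves l \<union> Cons True ` leaves r"

text \<open>Sign of the vertex at a given path (meaningful only at internal nodes).\<close>
fun sign_at :: "stree \<Rightarrow> bool list \<Rightarrow> bool" where
  "sign_at Leaf _ = True"
| "sign_at (Node s l r) [] = s"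
| "sign_at (Node s l r) (b # q) = sign_at (if b then r else l) q"

text \<open>Longest common prefix of two paths: the path of the lowest common ancestor.\<close>
fun lcp :: "bool list \<Rightarrow> bool list \<Rightarrow> bool list" where
  "lcp (a # as) (b # bs) = (if a = b then a # lcp as bs else [])"
| "lcp _ _ = []"

text \<open>A set of leaves induces a subtree whose nodes are exactly the lowest common
  ancestors of pairs of distinct leaves of the set; it is a plus-subtree iff all
  these nodes carry the plus sign.\<close>
definition plus_induced :: "stree \<Rightarrow> bool list set \<Rightarrow> bool" where
  "plus_induced t S \<longleftrightarrow> S \<subseteq> leaves t \<and>
     (\<forall>a\<in>S. \<forall>b\<in>S. a \<noteq> b \<longrightarrow> sign_at t (lcp a b))"

definition LIS :: "stree \<Rightarrow> nat" where
  "LIS t = Max (card ` {S. plus_induced t S})"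

text \<open>Insertion on the edge above the vertex with preorder index i (root = 0):
  a new node with sign s is inserted there, and a new leaf is grafted on its
  right (if side) or left (otherwise).\<close>
fun insert_at :: "nat \<Rightarrow> bool \<Rightarrow> bool \<Rightarrow> stree \<Rightarrow> stree" where
  "insert_at i s side Leaf =
     Node s Leaf Leaf"
| "insert_at i s side (Node s' l r) =
     (if i = 0 then (if side then Node s (Node s' l r) Leaf else Node s Leaf (Node s' l r))
      else if i - 1 < nverts l then Node s' (insert_at (i - 1) s side l) r
      else Node s' l (insert_at (i - 1 - nverts l) s side r))"

text \<open>Randomness of step k (from T_(k+1), which has 2k+1 edges, to T_(k+2)):
  a uniform edge index, a sign (plus with probability p) and a side (fair).\<close>
definition remy_step :: "real \<Rightarrow> nat \<Rightarrow> (nat \<times> bool \<times> bool) pmf" where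
  "remy_step p k = pair_pmf (pmf_of_set {0..<2*k+1}) (pair_pmf (bernoulli_pmf p) (bernoulli_pmf (1/2)))"

definition remy_space :: "real \<Rightarrow> (nat \<Rightarrow> nat \<times> bool \<times> bool) measure" where
  "remy_space p = PiM UNIV (\<lambda>k. measure_pmf (remy_step p k))"

text \<open>remy_tree \<omega> k is T_(k+1).\<close>
fun remy_tree :: "(nat \<Rightarrow> nat \<times> bool \<times> bool) \<Rightarrow> nat \<Rightarrow> stree" where
  "remy_tree \<omega> 0 = Leaf"
| "remy_tree \<omega> (Suc k) = (case \<omega> k of (i, s, side) \<Rightarrow> insert_at i s side (remy_tree \<omega> k))"

definition X :: "(nat \<Rightarrow> nat \<times> bool \<times> bool) \<Rightarrow> nat \<Rightarrow> nat" where
  "X \<omega> n = LIS (remy_tree \<omega> (n - 1))"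

end

theory Submission
  imports Defs
begin


fun B :: "stree \<Rightarrow> nat" where
  "B Leaf = 1"
| "B (Node s l r) = (if s then B l + B r else max (B l) (B r))"

fun W :: "stree \<Rightarrow> bool list set" where
  "W Leaf = {[]}"
| "W (Node s l r) = (if s then Cons False ` W l \<union> Cons True ` W r
     else if B r \<le> B l then Cons False ` W l else Cons True ` W r)"

lemma B_pos: "B t \<ge> 1"
  by (induction t) auto

lemma finite_leaves: "finite (leaves t)"
  by (induction t) auto

lemma W_sub: "W t \<subseteq> leaves t"
  by (induction t) auto

lemma finite_W: "finite (W t)"
  using W_sub finite_leaves finite_subset by blast

lemma card_W: "card (W t) = B t"
proof (induction t)
  case Leaf then show ?case by simp
next
  case (Node s l r)
  have d: "Cons False ` W l \<inter> Cons True ` W r = {}" by auto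
  have cl: "card (Cons False ` W l) = B l" using Node by (simp add: card_image)
  have cr: "card (Cons True ` W r) = B r" using Node by (simp add: card_image)
  show ?case using d cl cr finite_W
    by (auto simp: card_Un_disjoint)
qed

lemma lcp_cons_same[simp]: "lcp (a # x) (a # y) = a # lcp x y" by simp

lemma W_plus: "\<forall>a\<in>W t. \<forall>b\<in>W t. a \<noteq> b \<longrightarrow> sign_at t (lcp a b)"
proof (induction t)
  case Leaf then show ?case by simp
next
  case (Node s l r)
  show ?case
    using Node apply (auto split: if_splits) by blast+
qed

lemma plus_W: "plus_induced t (W t)"
  unfolding plus_induced_def using W_sub W_plus by blast

lemma LIS_ge_B: "B t \<le> LIS t"
proof -
  have fin: "finite {S. plus_induced t S}"
    by (rule finite_subset[of _ "Pow (leaves t)"]) (auto simp: plus_induced_def finite_leaves)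
  have "card (W t) \<in> card ` {S. plus_induced t S}" using plus_W by blast
  then have "card (W t) \<le> LIS t" unfolding LIS_def using fin by (simp add: Max_ge)
  then show ?thesis by (simp add: card_W)
qed

lemma nverts_insert[simp]: "nverts (insert_at i s side t) = nverts t + 2"
  by (induction i s side t rule: insert_at.induct) auto

lemma nverts_remy[simp]: "nverts (remy_tree \<omega> k) = 2 * k + 1"
  by (induction k) (auto split: prod.splits)

lemma B_insert_mono: "B t \<le> B (insert_at i s side t)"
  by (induction i s side t rule: insert_at.induct) auto

fun G :: "stree \<Rightarrow> nat set" where
  "G Leaf = {0}"
| "G (Node s l r) = insert 0 (if s then Suc ` G l \<union> (\<lambda>i. i + 1 + nverts l) ` G r
     else if B r \<le> B l then Suc ` G l else (\<lambda>i. i + 1 + nverts l) ` G r)"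

lemma G_sub: "G t \<subseteq> {..<nverts t}"
  by (induction t) auto

lemma finite_G: "finite (G t)"
  using G_sub finite_subset by blast

lemma card_G: "2 * B t \<le> card (G t) + 1"
proof (induction t)
  case Leaf then show ?case by simp
next
  case (Node s l r)
  have fl: "finite (Suc ` G l)" "finite ((\<lambda>i. i + 1 + nverts l) ` G r)" using finite_G by auto
  have cl: "card (Suc ` G l) = card (G l)" by (simp add: card_image)
  have cr: "card ((\<lambda>i. i + 1 + nverts l) ` G r) = card (G r)" by (simp add: card_image inj_on_def)
  have d: "Suc ` G l \<inter> (\<lambda>i. i + 1 + nverts l) ` G r = {}" using G_sub[of l] by force
  have z: "0 \<notin> Suc ` G l \<union> (\<lambda>i. i + 1 + nverts l) ` G r" by auto
  show ?case
  proof (cases s)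
    case True
    then have "card (G (Node s l r)) = 1 + card (G l) + card (G r)"
      using fl cl cr d z by (simp add: card_Un_disjoint card_insert_if)
    then show ?thesis using Node True by simp
  next
    case False
    show ?thesis
    proof (cases "B r \<le> B l")
      case True
      then have "card (G (Node s l r)) = 1 + card (G l)"
        using False fl cl z by (simp add: card_insert_if)
      then show ?thesis using Node True False by simp
    next
      case F2: False
      then have "card (G (Node s l r)) = 1 + card (G r)"
        using False fl cr z by (simp add: card_insert_if)
      then show ?thesis using Node F2 False by simp
    qed
  qed
qed

lemma card_G_node: assumes "t \<noteq> Leaf" shows "4 * B t + 1 \<le> 3 * card (G t)"
proof (cases t)
  case Leaf then show ?thesis using assms by simp
next
  case (Node s l r)
  have fl: "finite (Suc ` G l)" "finite ((\<lambda>i. i + 1 + nverts l) ` G r)" using finite_G by auto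
  have z: "0 \<notin> Suc ` G l \<union> (\<lambda>i. i + 1 + nverts l) ` G r" by auto
  have c1: "2 * B t \<le> card (G t) + 1" by (rule card_G)
  have "card (G t) \<ge> 2 * B t \<or> B t \<ge> 2"
  proof (cases s)
    case True then show ?thesis using Node B_pos[of l] B_pos[of r] by auto
  next
    case False
    have cl: "card (Suc ` G l) = card (G l)" by (simp add: card_image)
    have cr: "card ((\<lambda>i. i + 1 + nverts l) ` G r) = card (G r)" by (simp add: card_image inj_on_def)
    show ?thesis
    proof (cases "B r \<le> B l")
      case True
      then have "card (G t) = 1 + card (G l)"
        using Node False fl cl z by (simp add: card_insert_if)
      then show ?thesis using card_G[of l] Node True False by simp
    next
      case F2: False
      then have "card (G t) = 1 + card (G r)"
        using Node False fl cr z by (simp add: card_insert_if)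
      then show ?thesis using card_G[of r] Node F2 False by simp
    qed
  qed
  then show ?thesis using c1 B_pos[of t] by linarith
qed

lemma G_insert: "i \<in> G t \<Longrightarrow> B t + 1 \<le> B (insert_at i True side t)"
proof (induction t arbitrary: i)
  case Leaf then show ?case by simp
next
  case (Node s l r)
  show ?case
  proof (cases "i = 0")
    case True then show ?thesis by auto
  next
    case False
    then obtain j where ij: "i = Suc j \<and> j \<in> G l \<and> (s \<or> B r \<le> B l) \<or> i = j + 1 + nverts l \<and> j \<in> G r \<and> (s \<or> \<not> B r \<le> B l)"
      using Node.prems by (auto split: if_splits)
    then show ?thesis
    proof
      assume h: "i = Suc j \<and> j \<in> G l \<and> (s \<or> B r \<le> B l)"
      then have "j < nverts l" using G_sub by blast
      then show ?thesis using h Node.IH(1)[of j] by auto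
    next
      assume h: "i = j + 1 + nverts l \<and> j \<in> G r \<and> (s \<or> \<not> B r \<le> B l)"
      then show ?thesis using h Node.IH(2)[of j] by auto
    qed
  qed
qed

lemma remy_Suc_mono: "B (remy_tree \<omega> k) \<le> B (remy_tree \<omega> (Suc k))"
  by (auto split: prod.splits intro: B_insert_mono)

lemma remy_mono: "k \<le> k' \<Longrightarrow> B (remy_tree \<omega> k) \<le> B (remy_tree \<omega> k')"
proof (induction k' rule: dec_induct)
  case base then show ?case by simp
next
  case (step n) then show ?case using remy_Suc_mono[of \<omega> n] by linarith
qed

lemma remy_cong: "(\<And>j. j < k \<Longrightarrow> \<omega> j = \<omega>' j) \<Longrightarrow> remy_tree \<omega> k = remy_tree \<omega>' k"
  by (induction k) auto

lemma insert_not_leaf[simp]: "insert_at i s side t \<noteq> Leaf"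
  by (cases t) auto

lemma remy_not_leaf: "k \<ge> 1 \<Longrightarrow> remy_tree \<omega> k \<noteq> Leaf"
  by (cases k) (auto split: prod.splits)



definition ff :: "nat \<Rightarrow> real" where "ff y = 1 / (real y - 3/4)"

lemma ff_pos: "y \<ge> 1 \<Longrightarrow> ff y > 0" by (simp add: ff_def)
lemma ff_le4: "y \<ge> 1 \<Longrightarrow> ff y \<le> 4" by (simp add: ff_def field_simps)
lemma ff_anti: "1 \<le> y \<Longrightarrow> y \<le> z \<Longrightarrow> ff z \<le> ff y"
  by (simp add: ff_def frac_le)

lemma finite_step: "finite (set_pmf (remy_step p k))"
  by (simp add: remy_step_def)

lemma prob_good:
  assumes p: "0 \<le> p" "p \<le> 1" and sub: "A \<subseteq> {0..<2*k+1}"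
  shows "measure_pmf.prob (remy_step p k) (A \<times> ({True} \<times> UNIV)) = card A / (2*real k+1) * p"
proof -
  have fa: "finite A" using sub finite_subset by blast
  have "measure_pmf.prob (remy_step p k) (A \<times> ({True} \<times> UNIV))
     = measure_pmf.prob (pmf_of_set {0..<2*k+1}) A * (measure_pmf.prob (bernoulli_pmf p) {True} * measure_pmf.prob (bernoulli_pmf (1/2)) UNIV)"
    unfolding remy_step_def
    by (simp add: measure_pmf_prob_product)
  also have "\<dots> = card A / (2*real k+1) * p"
    using sub p by (simp add: measure_pmf_of_set measure_pmf_single Int_absorb1)
  finally show ?thesis by simp
qed

lemma key_ineq: fixes y c D p :: real assumes y: "y \<ge> 1" and c: "4*y+1 \<le> 3*c" and D: "D > 0" and p: "p>0"
shows "1/(y-3/4) - 1/((y-3/4)*(y+1/4)) * (c/D*p) \<le> (1 - (4*p/3)/D) * (1/(y-3/4))"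
proof -
  have ya: "y - 3/4 > 0" using y by simp
  have yb: "y + 1/4 > 0" using y by simp
  have "4/3 \<le> c / (y+1/4)" using c yb by (simp add: field_simps)
  then have "p/D * (4/3) \<le> p/D * (c / (y+1/4))" using p D by (intro mult_left_mono) auto
  then have "(p/D * (4/3)) / (y-3/4) \<le> (p/D * (c / (y+1/4))) / (y-3/4)" using ya by (intro divide_right_mono) auto
  moreover have "1/(y-3/4) - 1/((y-3/4)*(y+1/4)) * (c/D*p) = 1/(y-3/4) - (p/D * (c / (y+1/4))) / (y-3/4)"
    by (simp add: field_simps)
  moreover have "(1 - (4*p/3)/D) * (1/(y-3/4)) = 1/(y-3/4) - (p/D * (4/3)) / (y-3/4)"
  proof -
    have "(4*p/3)/D = p/D*(4/3)" by simp
    then show ?thesis by (simp add: left_diff_distrib diff_divide_distrib mult_ac)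
  qed
  ultimately show ?thesis by linarith
qed

lemma step_bound:
  assumes p: "0 < p" "p < 1" and t: "t \<noteq> Leaf" "nverts t = 2*k+1"
  shows "measure_pmf.expectation (remy_step p k) (\<lambda>x. ff (B (insert_at (fst x) (fst (snd x)) (snd (snd x)) t)))
     \<le> (1 - (4*p/3)/(2*real k+1)) * ff (B t)"
proof -
  define y where "y = B t"
  define \<delta> where "\<delta> = ff y - ff (y+1)"
  define Gd where "Gd = G t \<times> ({True} \<times> (UNIV::bool set))"
  have y1: "y \<ge> 1" using B_pos y_def by simp
  have \<delta>: "\<delta> = 1 / ((real y - 3/4) * (real y + 1/4))"
    using y1 by (simp add: \<delta>_def ff_def field_simps)
  have pt: "ff (B (insert_at (fst x) (fst (snd x)) (snd (snd x)) t)) \<le> ff y - \<delta> * indicator Gd x" for x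
  proof (cases "x \<in> Gd")
    case True
    then have "y + 1 \<le> B (insert_at (fst x) (fst (snd x)) (snd (snd x)) t)"
      using G_insert unfolding Gd_def y_def by (auto simp: mem_Times_iff)
    then show ?thesis using True ff_anti[of "y+1"] by (simp add: \<delta>_def)
  next
    case False
    then show ?thesis using ff_anti[OF y1 B_insert_mono[of t, folded y_def]] by simp
  qed
  have "measure_pmf.expectation (remy_step p k) (\<lambda>x. ff (B (insert_at (fst x) (fst (snd x)) (snd (snd x)) t)))
     \<le> measure_pmf.expectation (remy_step p k) (\<lambda>x. ff y - \<delta> * indicator Gd x)"
    by (intro integral_mono integrable_measure_pmf_finite finite_step pt)
  also have "\<dots> = ff y - \<delta> * measure_pmf.prob (remy_step p k) Gd"
    by (subst Bochner_Integration.integral_diff) (auto intro!: integrable_measure_pmf_finite finite_step)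
  also have "measure_pmf.prob (remy_step p k) Gd = card (G t) / (2*real k+1) * p"
  proof -
    have s: "G t \<subseteq> {0..<2*k+1}" using G_sub[of t] t(2) by (simp add: atLeast0LessThan)
    show ?thesis unfolding Gd_def by (rule prob_good[OF _ _ s]) (use p in auto)
  qed
  also have "ff y - \<delta> * (card (G t) / (2*real k+1) * p) \<le> (1 - (4*p/3)/(2*real k+1)) * ff y"
  proof -
    have cn: "4 * y + 1 \<le> 3 * card (G t)" using card_G_node[OF t(1)] unfolding y_def .
    have c: "4 * real y + 1 \<le> 3 * real (card (G t))"
      using of_nat_le_iff[where 'a=real, THEN iffD2, OF cn] by simp
    have "1/(real y-3/4) - 1/((real y-3/4)*(real y+1/4)) * (card (G t)/(2*real k+1)*p) \<le> (1 - (4*p/3)/(2*real k+1)) * (1/(real y-3/4))"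
      by (rule key_ineq) (use y1 c p in auto)
    then show ?thesis unfolding \<delta> ff_def .
  qed
  finally show ?thesis unfolding y_def .
qed



instance stree :: countable by countable_datatype

abbreviation MM :: "real \<Rightarrow> nat \<Rightarrow> (nat \<times> bool \<times> bool) measure" where
  "MM p k \<equiv> measure_pmf (remy_step p k)"

lemma PP: "product_prob_space (MM p)"
  by (simp add: product_prob_space_def product_sigma_finite_def product_prob_space_axioms_def
      prob_space_measure_pmf prob_space_imp_sigma_finite)

lemma remy_space_prob: "prob_space (remy_space p)"
proof -
  interpret product_prob_space "MM p" UNIV by (rule PP)
  show ?thesis unfolding remy_space_def by (rule P.prob_space_axioms)
qed

definition ins :: "nat \<times> bool \<times> bool \<Rightarrow> stree \<Rightarrow> stree" where
  "ins x t = insert_at (fst x) (fst (snd x)) (snd (snd x)) t"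

lemma remy_Suc: "remy_tree \<omega> (Suc k) = ins (\<omega> k) (remy_tree \<omega> k)"
  by (simp add: ins_def split: prod.splits)

declare remy_tree.simps(2)[simp del]

lemma meas_tree: "{..<k} \<subseteq> J \<Longrightarrow> (\<lambda>\<omega>. remy_tree \<omega> k) \<in> measurable (PiM J (MM p)) (count_space UNIV)"
proof (induction k)
  case 0 then show ?case by simp
next
  case (Suc k)
  have kJ: "k \<in> J" using Suc.prems by auto
  have "(\<lambda>\<omega>. ins (\<omega> k) (remy_tree \<omega> k)) \<in> measurable (PiM J (MM p)) (count_space UNIV)"
  proof (rule measurable_compose_countable[where f="\<lambda>t \<omega>. ins (\<omega> k) t"])
    fix t
    show "(\<lambda>\<omega>. ins (\<omega> k) t) \<in> measurable (PiM J (MM p)) (count_space UNIV)"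
      by (rule measurable_compose[OF measurable_component_singleton[OF kJ]]) simp
  next
    show "(\<lambda>\<omega>. remy_tree \<omega> k) \<in> measurable (PiM J (MM p)) (count_space UNIV)"
    proof -
      have "{..<k} \<subseteq> J" using Suc.prems by auto
      then show ?thesis by (rule Suc.IH)
    qed
  qed
  then show ?case by (simp add: remy_Suc)
qed

lemma integral_restrict:
  fixes g :: "(nat \<Rightarrow> nat \<times> bool \<times> bool) \<Rightarrow> ennreal"
  assumes g: "g \<in> borel_measurable (PiM {..<n} (MM p))"
    and dep: "\<And>\<omega>. g (restrict \<omega> {..<n}) = g \<omega>"
  shows "(\<integral>\<^sup>+\<omega>. g \<omega> \<partial>remy_space p) = (\<integral>\<^sup>+x. g x \<partial>PiM {..<n} (MM p))"
proof -
  interpret product_prob_space "MM p" UNIV by (rule PP)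
  have eq: "distr (PiM UNIV (MM p)) (PiM {..<n} (MM p)) (\<lambda>x. restrict x {..<n}) = PiM {..<n} (MM p)"
    by (rule distr_PiM_restrict_finite) auto
  have "integral\<^sup>N (distr (PiM UNIV (MM p)) (PiM {..<n} (MM p)) (\<lambda>x. restrict x {..<n})) g = (\<integral>\<^sup>+\<omega>. g (restrict \<omega> {..<n}) \<partial>PiM UNIV (MM p))"
    by (rule nn_integral_distr[OF measurable_restrict_subset]) (auto simp: g)
  then have "(\<integral>\<^sup>+x. g x \<partial>PiM {..<n} (MM p)) = (\<integral>\<^sup>+\<omega>. g (restrict \<omega> {..<n}) \<partial>PiM UNIV (MM p))"
    unfolding eq .
  then show ?thesis by (simp add: dep remy_space_def)
qed

lemma tree_restrict: "remy_tree (restrict \<omega> {..<n}) n = remy_tree \<omega> n"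
  by (rule remy_cong) simp

lemma integral_Suc:
  fixes h :: "stree \<Rightarrow> ennreal"
  shows "(\<integral>\<^sup>+\<omega>. h (remy_tree \<omega> (Suc k)) \<partial>remy_space p)
     = (\<integral>\<^sup>+\<omega>. (\<integral>\<^sup>+x. h (ins x (remy_tree \<omega> k)) \<partial>MM p k) \<partial>remy_space p)"
proof -
  interpret product_prob_space "MM p" UNIV by (rule PP)
  have m1: "(\<lambda>\<omega>. h (remy_tree \<omega> (Suc k))) \<in> borel_measurable (PiM (insert k {..<k}) (MM p))"
    by (rule measurable_compose[OF meas_tree]) auto
  have "(\<integral>\<^sup>+\<omega>. h (remy_tree \<omega> (Suc k)) \<partial>remy_space p)
      = (\<integral>\<^sup>+\<omega>. h (remy_tree \<omega> (Suc k)) \<partial>PiM {..<Suc k} (MM p))"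
  proof (rule integral_restrict)
    show "(\<lambda>\<omega>. h (remy_tree \<omega> (Suc k))) \<in> borel_measurable (PiM {..<Suc k} (MM p))"
      using m1 by (simp only: lessThan_Suc)
    show "h (remy_tree (restrict \<omega> {..<Suc k}) (Suc k)) = h (remy_tree \<omega> (Suc k))" for \<omega>
      by (simp only: tree_restrict)
  qed
  also have "\<dots> = (\<integral>\<^sup>+\<omega>. h (remy_tree \<omega> (Suc k)) \<partial>PiM (insert k {..<k}) (MM p))"
    by (simp add: lessThan_Suc)
  also have "\<dots> = (\<integral>\<^sup>+x. (\<integral>\<^sup>+y. h (remy_tree (x(k := y)) (Suc k)) \<partial>MM p k) \<partial>PiM {..<k} (MM p))"
    by (rule product_nn_integral_insert[OF _ _ m1]) auto
  also have "\<dots> = (\<integral>\<^sup>+x. (\<integral>\<^sup>+y. h (ins y (remy_tree x k)) \<partial>MM p k) \<partial>PiM {..<k} (MM p))"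
  proof -
    have "remy_tree (x(k := y)) (Suc k) = ins y (remy_tree x k)" for x y
      by (simp add: remy_Suc) (rule arg_cong[where f="ins y"], rule remy_cong, simp)
    then show ?thesis by simp
  qed
  also have "\<dots> = (\<integral>\<^sup>+\<omega>. (\<integral>\<^sup>+x. h (ins x (remy_tree \<omega> k)) \<partial>MM p k) \<partial>remy_space p)"
  proof (rule integral_restrict[symmetric])
    show "(\<lambda>\<omega>. (\<integral>\<^sup>+x. h (ins x (remy_tree \<omega> k)) \<partial>MM p k)) \<in> borel_measurable (PiM {..<k} (MM p))"
      by (rule measurable_compose[OF meas_tree, where g="\<lambda>t. (\<integral>\<^sup>+x. h (ins x t) \<partial>MM p k)"]) auto
    show "(\<integral>\<^sup>+x. h (ins x (remy_tree (restrict \<omega> {..<k}) k)) \<partial>MM p k) = (\<integral>\<^sup>+x. h (ins x (remy_tree \<omega> k)) \<partial>MM p k)" for \<omega>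
      by (simp only: tree_restrict)
  qed
  finally show ?thesis .
qed

definition ee :: "real \<Rightarrow> nat \<Rightarrow> ennreal" where
  "ee p k = (\<integral>\<^sup>+\<omega>. ennreal (ff (B (remy_tree \<omega> k))) \<partial>remy_space p)"

lemma meas_tree_space: "(\<lambda>\<omega>. remy_tree \<omega> k) \<in> measurable (remy_space p) (count_space UNIV)"
  unfolding remy_space_def by (rule meas_tree) auto

lemma ee_step:
  assumes p: "0 < p" "p < 1" and k: "k \<ge> 1"
  shows "ee p (Suc k) \<le> ennreal (1 - (4*p/3)/(2*real k+1)) * ee p k"
proof -
  have \<rho>: "0 \<le> 1 - (4*p/3)/(2*real k+1)" using p k by (simp add: field_simps)
  have "ee p (Suc k) = (\<integral>\<^sup>+\<omega>. (\<integral>\<^sup>+x. ennreal (ff (B (ins x (remy_tree \<omega> k)))) \<partial>MM p k) \<partial>remy_space p)"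
    unfolding ee_def by (rule integral_Suc)
  also have "\<dots> \<le> (\<integral>\<^sup>+\<omega>. ennreal (1 - (4*p/3)/(2*real k+1)) * ennreal (ff (B (remy_tree \<omega> k))) \<partial>remy_space p)"
  proof (rule nn_integral_mono)
    fix \<omega>
    let ?t = "remy_tree \<omega> k"
    have "(\<integral>\<^sup>+x. ennreal (ff (B (ins x ?t))) \<partial>MM p k) = ennreal (measure_pmf.expectation (remy_step p k) (\<lambda>x. ff (B (ins x ?t))))"
      by (rule nn_integral_eq_integral) (auto intro!: integrable_measure_pmf_finite finite_step ff_pos[THEN less_imp_le] B_pos)
    also have "\<dots> \<le> ennreal ((1 - (4*p/3)/(2*real k+1)) * ff (B ?t))"
      unfolding ins_def using step_bound[OF p remy_not_leaf[OF k] nverts_remy] by (rule ennreal_leI)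
    also have "\<dots> = ennreal (1 - (4*p/3)/(2*real k+1)) * ennreal (ff (B ?t))"
      by (rule ennreal_mult[OF \<rho>]) (rule less_imp_le[OF ff_pos[OF B_pos]])
    finally show "(\<integral>\<^sup>+x. ennreal (ff (B (ins x ?t))) \<partial>MM p k) \<le> ennreal (1 - (4*p/3)/(2*real k+1)) * ennreal (ff (B ?t))" .
  qed
  also have "\<dots> = ennreal (1 - (4*p/3)/(2*real k+1)) * ee p k"
    unfolding ee_def by (rule nn_integral_cmult) (rule measurable_compose[OF meas_tree_space], simp)
  finally show ?thesis .
qed

lemma ee_le4: "ee p k \<le> 4"
proof -
  interpret prob_space "remy_space p" by (rule remy_space_prob)
  have "ee p k \<le> (\<integral>\<^sup>+\<omega>. 4 \<partial>remy_space p)"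
    unfolding ee_def by (intro nn_integral_mono) (metis ennreal_leI ennreal_numeral ff_le4 B_pos)
  also have "\<dots> = 4" by (simp add: emeasure_space_1)
  finally show ?thesis .
qed

lemma powr_ratio:
  assumes k: "k \<ge> 1" and a: "0 \<le> a"
  shows "1 - a / real k \<le> (real k / (real k + 1)) powr a"
proof -
  have "ln (real k / (real k + 1)) = - ln (1 + 1 / real k)"
    using k by (simp add: ln_div field_simps)
  moreover have l: "ln (1 + 1 / real k) \<le> 1 / real k" by (rule ln_add_one_self_le_self) simp
  ultimately have "- (a / real k) \<le> a * ln (real k / (real k + 1))"
    using mult_left_mono[OF l a] by simp
  then have "1 + - (a / real k) \<le> exp (a * ln (real k / (real k + 1)))"
    using exp_ge_add_one_self[of "- (a / real k)"] exp_le_cancel_iff by (meson order_trans)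
  then show ?thesis using k by (simp add: powr_def)
qed

lemma ee_bound:
  assumes p: "0 < p" "p < 1" and k: "k \<ge> 8"
  shows "ee p k \<le> ennreal (32 / real k powr (5*p/8))"
  using k
proof (induction k rule: dec_induct)
  case base
  have "8 powr (5*p/8) \<le> (8::real) powr 1" using p by (intro powr_mono) auto
  then have "4 \<le> 32 / (8::real) powr (5*p/8)" by (simp add: field_simps)
  then show ?case using ee_le4[of p 8] by (metis ennreal_leI ennreal_numeral order_trans of_nat_numeral)
next
  case (step k)
  let ?a = "5*p/8"
  have k1: "k \<ge> 1" using step by simp
  have kp: "real k powr ?a > 0" using k1 by simp
  have kp1: "real (Suc k) powr ?a > 0" by simp
  have \<rho>: "0 \<le> 1 - (4*p/3)/(2*real k+1)" using p k1 by (simp add: field_simps)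
  have r1: "1 - (4*p/3)/(2*real k+1) \<le> 1 - ?a / real k"
  proof -
    have "?a * (2*real k+1) \<le> (4*p/3) * real k" using p step(1) by (simp add: field_simps)
    then have "?a / real k \<le> (4*p/3)/(2*real k+1)" using k1 by (simp add: field_simps)
    then show ?thesis by simp
  qed
  also have "\<dots> \<le> (real k / (real k + 1)) powr ?a" by (rule powr_ratio) (use k1 p in auto)
  also have "\<dots> = real k powr ?a / real (Suc k) powr ?a" by (simp add: powr_divide add.commute)
  finally have r: "1 - (4*p/3)/(2*real k+1) \<le> real k powr ?a / real (Suc k) powr ?a" .
  have "ee p (Suc k) \<le> ennreal (1 - (4*p/3)/(2*real k+1)) * ee p k" by (rule ee_step[OF p k1])
  also have "\<dots> \<le> ennreal (1 - (4*p/3)/(2*real k+1)) * ennreal (32 / real k powr ?a)"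
    by (rule mult_left_mono) (use step in auto)
  also have "\<dots> = ennreal ((1 - (4*p/3)/(2*real k+1)) * (32 / real k powr ?a))"
    by (rule ennreal_mult[symmetric, OF \<rho>]) (use kp in simp)
  also have "\<dots> \<le> ennreal (32 / real (Suc k) powr ?a)"
  proof (rule ennreal_leI)
    have "(1 - (4*p/3)/(2*real k+1)) * (32 / real k powr ?a) \<le> (real k powr ?a / real (Suc k) powr ?a) * (32 / real k powr ?a)"
      using r kp by (intro mult_right_mono) auto
    also have "\<dots> = 32 / real (Suc k) powr ?a" using kp by simp
    finally show "(1 - (4*p/3)/(2*real k+1)) * (32 / real k powr ?a) \<le> 32 / real (Suc k) powr ?a" .
  qed
  finally show ?case .
qed

lemma tree_event: "{\<omega>. P (remy_tree \<omega> k)} \<in> sets (remy_space p)"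
proof -
  have "(\<lambda>\<omega>. remy_tree \<omega> k) -` {t. P t} \<inter> space (remy_space p) \<in> sets (remy_space p)"
    by (rule measurable_sets[OF meas_tree_space]) simp
  then show ?thesis by (simp add: remy_space_def space_PiM vimage_def)
qed

lemma ffB_nonneg[simp]: "0 \<le> ff (B t)"
  using ff_pos[OF B_pos[of t]] by simp

lemma space_remy[simp]: "space (remy_space p) = UNIV"
  by (simp add: remy_space_def space_PiM)

lemma tail_bound:
  assumes p: "0 < p" "p < 1" and k: "k \<ge> 8"
  shows "measure (remy_space p) {\<omega>. real (B (remy_tree \<omega> k)) < real k powr (9*p/16)}
     \<le> 32 * (real k powr (9*p/16) / real k powr (5*p/8))"
proof -
  interpret prob_space "remy_space p" by (rule remy_space_prob)
  let ?b = "9*p/16" and ?a = "5*p/8"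
  let ?S = "{\<omega>. real (B (remy_tree \<omega> k)) < real k powr ?b}"
  let ?u = "\<lambda>\<omega>. ennreal (ff (B (remy_tree \<omega> k)))"
  have kb: "real k powr ?b > 0" using k by simp
  have ka: "real k powr ?a > 0" using k by simp
  have sub: "?S \<subseteq> {\<omega> \<in> space (remy_space p). 1 \<le> ennreal (real k powr ?b) * ?u \<omega>}"
  proof safe
    fix \<omega> assume h: "real (B (remy_tree \<omega> k)) < real k powr ?b"
    let ?y = "real (B (remy_tree \<omega> k))"
    have y1: "?y \<ge> 1" using B_pos by simp
    have "1 / real k powr ?b \<le> ff (B (remy_tree \<omega> k))"
      unfolding ff_def using h y1 kb by (intro divide_left_mono) (auto intro!: mult_pos_pos)
    then have "1 \<le> real k powr ?b * ff (B (remy_tree \<omega> k))"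
      using kb by (simp add: field_simps)
    then have "ennreal 1 \<le> ennreal (real k powr ?b * ff (B (remy_tree \<omega> k)))" by (rule ennreal_leI)
    also have "\<dots> = ennreal (real k powr ?b) * ?u \<omega>"
      by (rule ennreal_mult) (use kb in auto)
    finally show "1 \<le> ennreal (real k powr ?b) * ?u \<omega>" by simp
  qed simp
  have "emeasure (remy_space p) ?S \<le> emeasure (remy_space p) {\<omega> \<in> space (remy_space p). 1 \<le> ennreal (real k powr ?b) * ?u \<omega>}"
    by (rule emeasure_mono[OF sub]) (simp add: tree_event[where P="\<lambda>t. 1 \<le> ennreal (real k powr ?b) * ennreal (ff (B t))"])
  also have "\<dots> \<le> ennreal (real k powr ?b) * (\<integral>\<^sup>+\<omega>. ?u \<omega> * indicator (space (remy_space p)) \<omega> \<partial>remy_space p)"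
  proof (rule nn_integral_Markov_inequality)
    show "(\<lambda>\<omega>. ?u \<omega> * indicator (space (remy_space p)) \<omega>) \<in> borel_measurable (remy_space p)"
      using measurable_compose[OF meas_tree_space[of k p], where g="\<lambda>t. ff (B t)" and L=borel] by simp
    show "space (remy_space p) \<in> sets (remy_space p)" by (rule sets.top)
  qed
  also have "(\<integral>\<^sup>+\<omega>. ?u \<omega> * indicator (space (remy_space p)) \<omega> \<partial>remy_space p) = ee p k"
    unfolding ee_def by simp
  also have "ennreal (real k powr ?b) * ee p k \<le> ennreal (real k powr ?b) * ennreal (32 / real k powr ?a)"
    by (rule mult_left_mono[OF ee_bound[OF p k]]) simp
  also have "\<dots> = ennreal (32 * (real k powr ?b / real k powr ?a))"
    by (subst ennreal_mult[symmetric]) (use kb ka in auto)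
  finally have "ennreal (measure (remy_space p) ?S) \<le> ennreal (32 * (real k powr ?b / real k powr ?a))"
    by (simp add: emeasure_eq_measure)
  then show ?thesis using kb ka by (subst (asm) ennreal_le_iff) auto
qed

lemma AE_dyadic:
  assumes p: "0 < p" "p < 1"
  shows "AE \<omega> in remy_space p. \<exists>J. \<forall>j\<ge>J. real (2^j) powr (9*p/16) \<le> real (B (remy_tree \<omega> (2^j)))"
proof -
  interpret prob_space "remy_space p" by (rule remy_space_prob)
  let ?b = "9*p/16" and ?a = "5*p/8"
  define A where "A j = {\<omega>. real (B (remy_tree \<omega> (2^j))) < real (2^j) powr ?b}" for j :: nat
  define r where "r = 2 powr ?b / 2 powr ?a"
  have r0: "0 < r" unfolding r_def by simp
  have r1: "r < 1" unfolding r_def using p by (simp add: powr_less_mono)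
  have ev: "A j \<in> sets (remy_space p)" for j
    unfolding A_def by (rule tree_event)
  have fin: "emeasure (remy_space p) (A j) < \<infinity>" for j
    by (simp add: emeasure_eq_measure)
  have bnd: "norm (measure (remy_space p) (A j)) \<le> 32 * r ^ j" if j: "j \<ge> 3" for j
  proof -
    have "(8::nat) \<le> 2^3" by simp
    also have "(2::nat)^3 \<le> 2^j" using j by (intro power_increasing) auto
    finally have k: "8 \<le> (2::nat)^j" .
    have e: "real (2^j) powr x = (2 powr x)^j" for x
    proof -
      have "real (2^j) = 2 powr real j" by (simp add: powr_realpow)
      then have "real (2^j) powr x = 2 powr (real j * x)" by (simp add: powr_powr)
      also have "\<dots> = (2 powr x) powr real j" by (simp add: powr_powr mult.commute)
      also have "\<dots> = (2 powr x)^j" by (simp add: powr_realpow)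
      finally show ?thesis .
    qed
    have "measure (remy_space p) (A j) \<le> 32 * (real (2^j) powr ?b / real (2^j) powr ?a)"
      unfolding A_def using tail_bound[OF p k] by simp
    also have "\<dots> = 32 * r ^ j" unfolding e r_def by (simp add: power_divide)
    finally show ?thesis by simp
  qed
  have sum: "summable (\<lambda>j. measure (remy_space p) (A j))"
    by (rule summable_comparison_test'[OF _ bnd]) (use r0 r1 in \<open>auto intro!: summable_mult summable_geometric\<close>)
  have "AE \<omega> in remy_space p. eventually (\<lambda>j. \<omega> \<in> space (remy_space p) - A j) sequentially"
    by (rule borel_cantelli_AE1[OF ev fin sum])
  then show ?thesis
  proof (rule eventually_mono)
    fix \<omega> assume "eventually (\<lambda>j. \<omega> \<in> space (remy_space p) - A j) sequentially"
    then obtain J where "\<forall>j\<ge>J. \<omega> \<notin> A j" by (auto simp: eventually_sequentially)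
    then show "\<exists>J. \<forall>j\<ge>J. real (2^j) powr (9*p/16) \<le> real (B (remy_tree \<omega> (2^j)))"
      unfolding A_def by (auto simp: not_less)
  qed
qed

lemma lower_det:
  assumes p: "0 < p" "p < 1" and J: "\<forall>j\<ge>J. real (2^j) powr (9*p/16) \<le> real (B (remy_tree \<omega> (2^j)))"
    and n: "n \<ge> 1"
  shows "(1/(2*2^J)) * real n powr (p/2) \<le> real (X \<omega> n)"
proof -
  let ?c = "1/(2*2^J) :: real"
  have XB: "real (B (remy_tree \<omega> (n-1))) \<le> real (X \<omega> n)"
    unfolding X_def using LIS_ge_B by simp
  have c2: "?c \<le> 1/2" by (simp add: field_simps)
  have np: "real n powr (p/2) > 0" using n by simp
  show ?thesis
  proof (cases "n - 1 < 2^J")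
    case True
    then have nJn: "n \<le> 2^J" using n by linarith
    have nJ: "real n \<le> 2^J" using of_nat_le_iff[where 'a=real, THEN iffD2, OF nJn] by simp
    have "real n powr (p/2) \<le> real n powr 1" using n p by (intro powr_mono) auto
    also have "\<dots> \<le> 2^J" using nJ n by simp
    finally have "?c * real n powr (p/2) \<le> ?c * 2^J" by (intro mult_left_mono) auto
    also have "\<dots> \<le> 1" by simp
    also have "1 \<le> real (B (remy_tree \<omega> (n-1)))" using B_pos by simp
    finally show ?thesis using XB by linarith
  next
    case False
    define m where "m = n - 1"
    have "1 \<le> (2::nat)^J" by simp
    then have m1: "m \<ge> 1" using False m_def by linarith
    obtain j where j: "2^j \<le> m" "m < 2^(j+1)" using ex_power_ivl1[of 2 m] m1 by auto
    have jJ: "J \<le> j"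
    proof (rule ccontr)
      assume "\<not> J \<le> j"
      then have "(2::nat)^(j+1) \<le> 2^J" by (intro power_increasing) auto
      then show False using j False m_def by linarith
    qed
    have "real (2^j) powr (9*p/16) \<le> real (B (remy_tree \<omega> (2^j)))" using J jJ by blast
    also have "\<dots> \<le> real (B (remy_tree \<omega> m))" using remy_mono[OF j(1)] by simp
    finally have h1: "real (2^j) powr (9*p/16) \<le> real (X \<omega> n)" using XB m_def by simp
    have "n \<le> 2 * 2^j" using j(2) m_def n by simp
    then have "real n \<le> 2 * 2^j" using of_nat_le_iff[where 'a=real, THEN iffD2] by fastforce
    then have n2: "real n / 2 \<le> real (2^j)" by simp
    have "2 \<le> n" using m1 m_def by linarith
    then have n21: "1 \<le> real n / 2" by simp
    have "(real n / 2) powr (p/2) \<le> (real n / 2) powr (9*p/16)" using n21 p by (intro powr_mono) auto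
    also have "\<dots> \<le> real (2^j) powr (9*p/16)" using n2 n21 p by (intro powr_mono2) auto
    finally have h2: "(real n / 2) powr (p/2) \<le> real (X \<omega> n)" using h1 by linarith
    have "(2::real) powr (p/2) \<le> 2 powr 1" using p by (intro powr_mono) auto
    then have t2: "(2::real) powr (p/2) \<le> 2" by simp
    have "(real n / 2) powr (p/2) = real n powr (p/2) / 2 powr (p/2)" by (rule powr_divide)
    also have "\<dots> \<ge> real n powr (p/2) / 2" using t2 np by (intro divide_left_mono) auto
    finally have "real n powr (p/2) / 2 \<le> real (X \<omega> n)" using h2 by linarith
    moreover have "?c * real n powr (p/2) \<le> real n powr (p/2) / 2" using c2 np by (simp add: field_simps)
    ultimately show ?thesis by linarith
  qed
qed

theorem lemma9p6:
  fixes p :: real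
  assumes "0 < p" and "p < 1"
  shows "\<exists>M :: (nat \<Rightarrow> nat \<times> bool \<times> bool) \<Rightarrow> real.
           M \<in> borel_measurable (remy_space p) \<and>
           (AE \<omega> in remy_space p. M \<omega> > 0) \<and>
           (AE \<omega> in remy_space p. \<forall>n\<ge>1. real (X \<omega> n) \<ge> M \<omega> * real n powr (p / 2))"
proof (intro exI conjI)
  define M where "M \<omega> = (INF n\<in>{1::nat..}. real (X \<omega> n) / real n powr (p/2))" for \<omega>
  have low: "M \<omega> \<le> real (X \<omega> n) / real n powr (p/2)" if "n \<ge> 1" for \<omega> n
    unfolding M_def using that by (intro cINF_lower bdd_belowI2[where m=0]) auto
  show "M \<in> borel_measurable (remy_space p)"
    unfolding M_def
  proof (rule borel_measurable_cINF_real)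
    fix n :: nat
    show "(\<lambda>\<omega>. real (X \<omega> n) / real n powr (p/2)) \<in> borel_measurable (remy_space p)"
      unfolding X_def by (rule measurable_compose[OF meas_tree_space]) simp
  qed simp
  show "AE \<omega> in remy_space p. M \<omega> > 0"
    using AE_dyadic[OF assms]
  proof (rule eventually_mono)
    fix \<omega> assume "\<exists>J. \<forall>j\<ge>J. real (2^j) powr (9*p/16) \<le> real (B (remy_tree \<omega> (2^j)))"
    then obtain J where J: "\<forall>j\<ge>J. real (2^j) powr (9*p/16) \<le> real (B (remy_tree \<omega> (2^j)))" by blast
    have "1/(2*2^J) \<le> M \<omega>"
      unfolding M_def
    proof (rule cINF_greatest)
      fix n :: nat assume "n \<in> {1..}"
      then have n: "n \<ge> 1" by simp
      have "(1/(2*2^J)) * real n powr (p/2) \<le> real (X \<omega> n)" by (rule lower_det[OF assms J n])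
      then show "1/(2*2^J) \<le> real (X \<omega> n) / real n powr (p/2)"
        using n by (simp add: pos_le_divide_eq)
    qed auto
    moreover have "(0::real) < 1/(2*2^J)" by simp
    ultimately show "M \<omega> > 0" by linarith
  qed
  show "AE \<omega> in remy_space p. \<forall>n\<ge>1. real (X \<omega> n) \<ge> M \<omega> * real n powr (p / 2)"
  proof (rule AE_I2, intro allI impI)
    fix \<omega> and n :: nat assume n: "n \<ge> 1"
    have "M \<omega> \<le> real (X \<omega> n) / real n powr (p/2)" by (rule low[OF n])
    then show "real (X \<omega> n) \<ge> M \<omega> * real n powr (p / 2)"
      using n by (simp add: pos_le_divide_eq)
  qed
qed

end
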